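(* Let $r\ge1$ and let $(a_n)_{n\ge1}$ be any sequence of non-negative real numbers with $\lim_{n\to\infty}a_n=0$. Then there exists $\mu\in\mathcal P_r$ such that $d_r(\delta^{\bullet,n}_\bullet,\mu)\ge a_n$ for every $n\in\mathbb N$.
   Context: $\mathcal P$ denotes the set of Borel probability measures on $\mathbb R$; $\mathcal P_r=\{\mu\in\mathcal P:\int|x|^r{\rm d}\mu(x)<\infty\}$. For $\mu\in\mathcal P$, $F_\mu(x)=\mu(]-\infty,x])$ and $F_\mu^{-1}(t)=\sup\{x: F_\mu(x)\le t\}$, $t\in]0,1[$. $d_r(\mu,\nu)=\big(\int_0^1|F_\mu^{-1}(t)-F_\nu^{-1}(t)|^r{\rm d}t\big)^{1/r}$ on $\mathcal P_r$. With $\Xi_n=\{\mathbf x\in\mathbb R^n:x_1\le\dots\le x_n\}$, $\Pi_n=\{\mathbf p\in\mathbb R^n:p_i\ge0,\sum_ip_i=1\}$ and $\delta^{\mathbf p}_{\mathbf x}=\sum_ip_i\delta_{x_i}$, set $d_r(\delta^{\bullet,n}_\bullet,\mu)=\min_{\mathbf x\in\Xi_n,\mathbf p\in\Pi_n}d_r(\delta^{\mathbf p}_{\mathbf x},\mu)$, the error of a best (unconstrained) $n$-point $r$-approximation (the minimum is attained). *)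

theory Defs
  imports "HOL-Probability.Probability"
begin

definition Pr_meas :: "real \<Rightarrow> real measure set" where
  "Pr_meas r = {M. prob_space M \<and> sets M = sets borel \<and>
                   integrable M (\<lambda>x. \<bar>x\<bar> powr r)}"

definition distrib_fun :: "real measure \<Rightarrow> real \<Rightarrow> real" where
  "distrib_fun M x = measure M {..x}"

definition quantile :: "real measure \<Rightarrow> real \<Rightarrow> real" where
  "quantile M t = Sup {x. distrib_fun M x \<le> t}"

definition d_r :: "real \<Rightarrow> real measure \<Rightarrow> real measure \<Rightarrow> real" where
  "d_r r M N = (LINT t:{0<..<1}|lborel. \<bar>quantile M t - quantile N t\<bar> powr r) powr (1 / r)"

definition Xi :: "nat \<Rightarrow> (nat \<Rightarrow> real) set" where
  "Xi n = {x. \<forall>i j. i \<le> j \<longrightarrow> j < n \<longrightarrow> x i \<le> x j}"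

definition Pi_vec :: "nat \<Rightarrow> (nat \<Rightarrow> real) set" where
  "Pi_vec n = {p. (\<forall>i<n. 0 \<le> p i) \<and> (\<Sum>i<n. p i) = 1}"

text \<open>The discrete measure sum_i p_i delta_{x_i}.\<close>
definition discrete_meas :: "nat \<Rightarrow> (nat \<Rightarrow> real) \<Rightarrow> (nat \<Rightarrow> real) \<Rightarrow> real measure" where
  "discrete_meas n x p = distr (point_measure {..<n} (\<lambda>i. ennreal (p i))) borel x"

definition best_approx_err :: "real \<Rightarrow> nat \<Rightarrow> real measure \<Rightarrow> real" where
  "best_approx_err r n M =
     Inf {d_r r (discrete_meas n x p) M | x p. x \<in> Xi n \<and> p \<in> Pi_vec n}"

end

theory Submission
  imports Defs
begin


lemma step_F_mono:
  fixes x p :: "nat \<Rightarrow> real"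
  assumes "\<forall>i<n. p i \<ge> 0" "y \<le> y'"
  shows "(\<Sum>i | i<n \<and> x i \<le> y. p i) \<le> (\<Sum>i | i<n \<and> x i \<le> y'. p i)"
  by (rule sum_mono2) (use assms in auto)

lemma step_sup_in:
  fixes x p :: "nat \<Rightarrow> real" and F :: "real \<Rightarrow> real"
  assumes F: "\<And>y. F y = (\<Sum>i | i<n \<and> x i \<le> y. p i)"
    and p: "\<forall>i<n. p i \<ge> 0" "(\<Sum>i<n. p i) = 1" and n: "n \<ge> 1"
    and t: "0 < t" "t < 1"
  shows "Sup {y. F y \<le> t} \<in> x ` {..<n}" "{y. F y \<le> t} \<noteq> {}" "bdd_above {y. F y \<le> t}"
proof -
  define X where "X = x ` {..<n}"
  have "0 \<in> {..<n}" using n by simp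
  then have fX: "finite X" "X \<noteq> {}" unfolding X_def by auto
  define S where "S = {y. F y \<le> t}"
  have "Min X - 1 \<in> S"
  proof -
    have e0: "{i. i<n \<and> x i \<le> Min X - 1} = {}"
    proof -
      have "Min X \<le> x i" if "i<n" for i using fX(1) that by (auto simp: X_def)
      then show ?thesis by force
    qed
    have "F (Min X - 1) = 0" unfolding F e0 by simp
    then show ?thesis using t by (simp add: S_def)
  qed
  then show ne: "{y. F y \<le> t} \<noteq> {}" unfolding S_def by auto
  have ub: "y < Max X" if "y \<in> S" for y
  proof (rule ccontr)
    assume "\<not> y < Max X"
    then have "{i. i<n \<and> x i \<le> y} = {..<n}"
    proof -
      have "x i \<le> Max X" if "i<n" for i using fX(1) that by (auto simp: X_def)
      then show ?thesis using \<open>\<not> y < Max X\<close> by force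
    qed
    then have "F y = 1" using p unfolding F by simp
    then show False using that t by (simp add: S_def)
  qed
  then show bdd: "bdd_above {y. F y \<le> t}" unfolding S_def bdd_above_def
    by (meson less_imp_le mem_Collect_eq)
  show "Sup {y. F y \<le> t} \<in> x ` {..<n}"
  proof (rule ccontr)
    define s where "s = Sup S"
    assume "Sup {y. F y \<le> t} \<notin> x ` {..<n}"
    then have sX: "s \<notin> X" by (simp add: s_def S_def X_def)
    obtain d where d: "d > 0" "\<forall>z\<in>X. z \<noteq> s \<longrightarrow> d \<le> dist s z"
      using finite_set_avoid[OF fX(1)] by blast
    have far: "d \<le> \<bar>s - z\<bar>" if "z \<in> X" for z
      using d that sX by (auto simp: dist_real_def)
    have eqset: "{i. i<n \<and> x i \<le> s - d/2} = {i. i<n \<and> x i \<le> s + d/2}"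
    proof -
      have "\<not> (s - d/2 < x i \<and> x i \<le> s + d/2)" if "i < n" for i
        using far[of "x i"] that d(1) by (auto simp: X_def)
      note H = this
      show ?thesis
      proof (rule Collect_cong)
        fix i show "(i<n \<and> x i \<le> s-d/2) = (i<n \<and> x i \<le> s+d/2)"
          by (cases "i<n") (use H[of i] d(1) in auto)
      qed
    qed
    have "s - d/2 < s" using d by simp
    then obtain z where z: "z \<in> S" "s - d/2 < z"
      using less_cSupD[of S "s - d/2"] ne unfolding s_def S_def by auto
    have "F (s - d/2) \<le> F z" unfolding F using step_F_mono[OF p(1)] z by (simp add: less_imp_le)
    also have "\<dots> \<le> t" using z by (simp add: S_def)
    finally have "s + d/2 \<in> S" using eqset by (simp add: S_def F)
    then have "s + d/2 \<le> s" using bdd cSup_upper[of "s + d/2" S] by (simp add: S_def s_def)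
    then show False using d by simp
  qed
qed



lemma discrete_F:
  assumes "p \<in> Pi_vec n"
  shows "distrib_fun (discrete_meas n x p) y = (\<Sum>i | i<n \<and> x i \<le> y. p i)"
proof -
  let ?P = "point_measure {..<n} (\<lambda>i. ennreal (p i))"
  have p0: "\<forall>i<n. 0 \<le> p i" using assms by (simp add: Pi_vec_def)
  have "distrib_fun (discrete_meas n x p) y = measure ?P (x -` {..y} \<inter> space ?P)"
    unfolding distrib_fun_def discrete_meas_def
    by (rule measure_distr) auto
  also have "x -` {..y} \<inter> space ?P = {i. i<n \<and> x i \<le> y}"
    by (auto simp: space_point_measure)
  also have "measure ?P {i. i<n \<and> x i \<le> y} = enn2real (\<Sum>i | i<n \<and> x i \<le> y. ennreal (p i))"
    by (simp add: measure_def emeasure_point_measure_finite subset_eq)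
  also have "\<dots> = (\<Sum>i | i<n \<and> x i \<le> y. p i)"
  proof -
    have "0 \<le> (\<Sum>i | i<n \<and> x i \<le> y. p i)" by (rule sum_nonneg) (use p0 in auto)
    then show ?thesis using p0 by (subst sum_ennreal) auto
  qed
  finally show ?thesis .
qed

lemma quantile_mono_on:
  assumes "mono (distrib_fun M)"
    and "\<And>t. t \<in> A \<Longrightarrow> {y. distrib_fun M y \<le> t} \<noteq> {} \<and> bdd_above {y. distrib_fun M y \<le> t}"
  shows "mono_on A (quantile M)"
proof (rule mono_onI)
  fix s t assume st: "s \<in> A" "t \<in> A" "s \<le> t"
  show "quantile M s \<le> quantile M t"
    unfolding quantile_def
    by (rule cSup_subset_mono) (use assms(2)[OF st(1)] assms(2)[OF st(2)] st(3) in auto)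
qed

lemma discrete_quantile:
  assumes "p \<in> Pi_vec n" "n \<ge> 1"
  shows "\<And>t. 0 < t \<Longrightarrow> t < 1 \<Longrightarrow> quantile (discrete_meas n x p) t \<in> x ` {..<n}"
    and "mono_on {0<..<1} (quantile (discrete_meas n x p))"
proof -
  have F: "\<And>y. distrib_fun (discrete_meas n x p) y = (\<Sum>i | i<n \<and> x i \<le> y. p i)"
    using discrete_F[OF assms(1)] .
  have p: "\<forall>i<n. 0 \<le> p i" "(\<Sum>i<n. p i) = 1" using assms(1) by (auto simp: Pi_vec_def)
  note S = step_sup_in[OF F p assms(2)]
  show "\<And>t. 0 < t \<Longrightarrow> t < 1 \<Longrightarrow> quantile (discrete_meas n x p) t \<in> x ` {..<n}"
    unfolding quantile_def using S(1) by blast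
  show "mono_on {0<..<1} (quantile (discrete_meas n x p))"
  proof (rule quantile_mono_on)
    show "mono (distrib_fun (discrete_meas n x p))"
      by (rule monoI) (simp add: F step_F_mono[OF p(1)])
  qed (use S(2,3) in auto)
qed



locale cons =
  fixes r A :: real and a :: "nat \<Rightarrow> real" and T :: "nat \<Rightarrow> nat"
  assumes r1: "r \<ge> 1" and A1: "A \<ge> 1"
    and Abnd: "\<And>n. n \<ge> 1 \<Longrightarrow> a n powr r \<le> A"
    and Tb: "\<And>j n. n \<ge> T j \<Longrightarrow> n \<ge> 1 \<Longrightarrow> a n powr r \<le> A / 2^j"
    and apos: "\<And>n. n \<ge> 1 \<Longrightarrow> a n \<ge> 0"
begin

definition N :: "nat \<Rightarrow> nat" where "N j = T (Suc j) + j + 1"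
definition v :: "nat \<Rightarrow> real" where "v j = A / 2^j / real (N j)"
definition L :: real where "L = 2 * A"
definition pos :: "nat \<Rightarrow> real" where "pos k = (if k = 0 then 0 else L * 4^k)"
definition h :: "nat \<times> nat \<Rightarrow> real" where
  "h q = (if snd q \<le> 2 * N (fst q) then v (fst q) * 2 powr r else 0)"
definition g :: "nat \<Rightarrow> real" where "g m = h (prod_decode m)"
definition w1 :: "nat \<Rightarrow> real" where "w1 m = g m / (L * 4^Suc m) powr r"
definition w :: "nat \<Rightarrow> real" where "w k = (if k = 0 then 1 - suminf w1 else w1 (k - 1))"
definition mom :: "nat \<Rightarrow> real" where "mom k = (if k = 0 then 0 else g (k - 1))"
definition S :: "nat \<Rightarrow> real" where "S k = (\<Sum>i<k. w i)"

lemma N1: "N j \<ge> 1" by (simp add: N_def)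
lemma r0: "r > 0" using r1 by simp
lemma L0: "L > 0" using A1 by (simp add: L_def)

lemma v_nonneg: "v j \<ge> 0" using A1 by (simp add: v_def)
lemma v_le: "v j \<le> A"
proof -
  have "v j \<le> A / 2^j" unfolding v_def using N1[of j] A1
    by (simp add: divide_le_eq_1 field_simps)
  also have "\<dots> \<le> A" using A1 by (simp add: divide_le_eq_1 field_simps)
  finally show ?thesis .
qed

lemma h_simp: "h (j,l) = (if l \<le> 2 * N j then v j * 2 powr r else 0)" by (simp add: h_def)
lemma h_nonneg: "h q \<ge> 0" using v_nonneg by (simp add: h_def)
lemma g_nonneg: "g m \<ge> 0" by (simp add: g_def h_nonneg)
lemma g_le: "g m \<le> A * 2 powr r"
  using v_le A1 by (simp add: g_def h_def)

lemma w1_nonneg: "w1 m \<ge> 0" by (simp add: w1_def g_nonneg)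

lemma w1_le: "w1 m \<le> (1/4) ^ Suc m"
proof -
  have pp1: "(L * 4^Suc m) powr r = L powr r * (4^Suc m) powr r" using L0 by (intro powr_mult; auto)
  have pp2: "L powr r = 2 powr r * A powr r" using A1 unfolding L_def by (intro powr_mult; auto)
  have pp: "(L * 4^Suc m) powr r = 2 powr r * (A powr r * (4^Suc m) powr r)"
    unfolding pp1 pp2 by simp
  have Ar: "A powr r \<ge> A" using powr_mono[OF r1, of A] A1 by simp
  have 4: "(4^Suc m :: real) powr r \<ge> 4^Suc m"
  proof -
    have "(1::real) \<le> 4^Suc m" by (rule one_le_power) simp
    then show ?thesis using powr_mono[OF r1, of "4^Suc m :: real"] by simp
  qed
  have "A * 4^Suc m \<le> A powr r * (4^Suc m) powr r"
    using Ar 4 A1 by (intro mult_mono) auto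
  then have den: "2 powr r * (A * 4^Suc m) \<le> (L * 4^Suc m) powr r"
    unfolding pp by (intro mult_left_mono) auto
  have dpos: "0 < 2 powr r * (A * 4^Suc m)" using A1 by simp
  have "w1 m \<le> A * 2 powr r / (L * 4^Suc m) powr r"
    unfolding w1_def using g_le[of m] by (intro divide_right_mono) auto
  also have "\<dots> \<le> A * 2 powr r / (2 powr r * (A * 4^Suc m))"
  proof (rule divide_left_mono)
    show "2 powr r * (A * 4^Suc m) \<le> (L * 4^Suc m) powr r" by (rule den)
    show "0 \<le> A * 2 powr r" using A1 by simp
    show "0 < (L * 4^Suc m) powr r * (2 powr r * (A * 4^Suc m))" using L0 dpos by simp
  qed
  also have "\<dots> = (1/4) ^ Suc m" using A1 by (simp add: power_one_over)
  finally show ?thesis .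
qed

lemma summable_w1: "summable w1"
proof (rule summable_comparison_test')
  show "summable (\<lambda>m. (1/4::real) ^ Suc m)" by (simp add: summable_geometric)
  show "norm (w1 m) \<le> (1/4) ^ Suc m" for m using w1_nonneg w1_le by simp
qed

lemma suminf_w1: "suminf w1 \<le> 1/3"
proof -
  have "suminf w1 \<le> (\<Sum>m. (1/4::real) ^ Suc m)"
    by (rule suminf_le) (use w1_le summable_w1 in \<open>auto simp: summable_geometric\<close>)
  also have "(\<Sum>m. (1/4::real) ^ Suc m) = 1/3"
    using suminf_geometric[of "1/4::real"] suminf_mult[of "\<lambda>m. (1/4::real)^m" "1/4"]
    by (simp add: summable_geometric)
  finally show ?thesis .
qed

lemma w_nonneg: "w k \<ge> 0"
  using suminf_w1 w1_nonneg by (simp add: w_def)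

lemma w_Suc: "w (Suc m) = w1 m" by (simp add: w_def)

lemma summable_w: "summable w"
  using summable_w1 by (subst summable_Suc_iff[symmetric]) (simp add: w_Suc)

lemma suminf_w: "suminf w = 1"
proof -
  have "(\<Sum>n. w (Suc n)) = suminf w - w 0" by (rule suminf_split_head[OF summable_w])
  then show ?thesis by (simp add: w_Suc w_def)
qed

lemma mom_eq: "w k * pos k powr r = mom k"
proof (cases k)
  case 0 then show ?thesis by (simp add: mom_def pos_def)
next
  case (Suc m)
  have "(L * 4^Suc m) powr r > 0" using L0 by simp
  then show ?thesis using Suc by (simp add: mom_def pos_def w_def w1_def)
qed

lemma mom_nonneg: "mom k \<ge> 0" by (simp add: mom_def g_nonneg)

lemma h_row: "(\<Sum>l\<le>K. h (j, l)) \<le> 3 * A * 2 powr r / 2^j"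
proof -
  have "(\<Sum>l\<le>K. h (j, l)) = (\<Sum>l\<in>{l\<in>{..K}. l \<le> 2 * N j}. v j * 2 powr r)"
    by (subst sum.inter_filter) (auto simp: h_simp)
  also have "\<dots> \<le> (\<Sum>l\<in>{..2 * N j}. v j * 2 powr r)"
    by (rule sum_mono2) (auto simp: v_nonneg)
  also have "\<dots> = real (2 * N j + 1) * (v j * 2 powr r)" by simp
  also have "\<dots> \<le> 3 * A * 2 powr r / 2^j"
  proof -
    have Nr: "real (N j) \<ge> 1" using N1[of j] by simp
    have "real (2 * N j + 1) * v j = (2 * real (N j) + 1) / real (N j) * (A / 2^j)"
      by (simp add: v_def field_simps)
    also have "\<dots> \<le> 3 * (A / 2^j)"
      using Nr A1 by (intro mult_right_mono) (auto simp: field_simps)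
    finally have "real (2 * N j + 1) * v j * 2 powr r \<le> 3 * (A / 2^j) * 2 powr r"
      by (rule mult_right_mono) simp
    then show ?thesis by (simp add: algebra_simps)
  qed
  finally show ?thesis .
qed

lemma summable_g: "summable g"
proof (rule summableI_nonneg_bounded)
  show "0 \<le> g m" for m by (rule g_nonneg)
  fix K
  have "(\<Sum>m<K. g m) = (\<Sum>q\<in>prod_decode ` {..<K}. h q)"
    by (simp add: g_def sum.reindex inj_prod_decode)
  also have "\<dots> \<le> (\<Sum>q\<in>{..K} \<times> {..K}. h q)"
  proof (rule sum_mono2)
    show "prod_decode ` {..<K} \<subseteq> {..K} \<times> {..K}"
    proof
      fix q assume "q \<in> prod_decode ` {..<K}"
      then obtain m where m: "m < K" "q = prod_decode m" by auto
      obtain j l where q: "q = (j, l)" by fastforce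
      have "prod_encode (j, l) = m" using m q by (metis prod_decode_inverse)
      then have "(j,l) \<in> {..K} \<times> {..K}"
        using le_prod_encode_1[of j l] le_prod_encode_2[of l j] m by auto
      then show "q \<in> {..K} \<times> {..K}" using q by simp
    qed
  qed (auto simp: h_nonneg)
  also have "\<dots> = (\<Sum>j\<le>K. \<Sum>l\<le>K. h (j, l))" by (simp add: sum.cartesian_product)
  also have "\<dots> \<le> (\<Sum>j\<le>K. 3 * A * 2 powr r * (1/2)^j)"
    by (rule sum_mono) (use h_row in \<open>simp add: power_one_over\<close>)
  also have "\<dots> = 3 * A * 2 powr r * (\<Sum>j\<le>K. (1/2::real)^j)" by (simp add: sum_distrib_left)
  also have "\<dots> \<le> 3 * A * 2 powr r * 2"
  proof -
    have "(\<Sum>j\<le>K. (1/2::real)^j) \<le> (\<Sum>j. (1/2::real)^j)"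
      by (rule sum_le_suminf) (auto simp: summable_geometric)
    also have "\<dots> = 2" using suminf_geometric[of "1/2::real"] by simp
    finally show ?thesis using A1 by (intro mult_left_mono) auto
  qed
  finally show "(\<Sum>m<K. g m) \<le> 3 * A * 2 powr r * 2" .
qed

lemma summable_mom: "summable mom"
proof -
  have "summable (\<lambda>k. mom (Suc k))" using summable_g by (simp add: mom_def)
  then show ?thesis by (subst summable_Suc_iff[symmetric])
qed

end


context cons begin

definition PM :: "nat measure" where "PM = point_measure UNIV (\<lambda>k. ennreal (w k))"
definition M :: "real measure" where "M = distr PM borel pos"

lemma pos_nonneg: "pos k \<ge> 0" using L0 by (simp add: pos_def)

lemma pos_strict: "strict_mono pos"
proof (rule strict_monoI)
  fix i k :: nat assume "i < k"
  then show "pos i < pos k"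
    using L0 by (auto simp: pos_def intro!: power_strict_increasing)
qed

lemma pos_le_iff: "pos i \<le> pos k \<longleftrightarrow> i \<le> k"
  using pos_strict by (simp add: strict_mono_less_eq)

lemma emeasure_PM_UNIV: "emeasure PM UNIV = 1"
proof -
  have "emeasure PM UNIV = (\<integral>\<^sup>+k. ennreal (w k) \<partial>count_space UNIV)"
    unfolding PM_def point_measure_def by (simp add: emeasure_density)
  also have "\<dots> = (\<Sum>k. ennreal (w k))" by (rule nn_integral_count_space_nat)
  also have "\<dots> = ennreal (suminf w)" using w_nonneg summable_w by (intro suminf_ennreal2) auto
  finally show ?thesis by (simp add: suminf_w)
qed

lemma space_PM: "space PM = UNIV" by (simp add: PM_def space_point_measure)
lemma sets_PM: "sets PM = Pow UNIV" by (simp add: PM_def sets_point_measure)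

lemma prob_PM: "prob_space PM"
  by (rule prob_spaceI) (simp add: space_PM emeasure_PM_UNIV)

lemma measure_PM_finite: "finite Z \<Longrightarrow> measure PM Z = (\<Sum>k\<in>Z. w k)"
proof -
  assume Z: "finite Z"
  have "measure PM Z = enn2real (\<Sum>k\<in>Z. ennreal (w k))"
    unfolding measure_def PM_def using Z by (simp add: emeasure_point_measure_finite2)
  also have "\<dots> = (\<Sum>k\<in>Z. w k)"
    using w_nonneg by (simp add: sum_ennreal sum_nonneg)
  finally show ?thesis .
qed

lemma pos_meas: "pos \<in> measurable PM borel" by (simp add: PM_def)

lemma prob_M: "prob_space M"
  unfolding M_def by (rule prob_space.prob_space_distr[OF prob_PM pos_meas])

lemma sets_M: "sets M = sets borel" by (simp add: M_def)

lemma F_M: "distrib_fun M y = measure PM (pos -` {..y})"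
  unfolding distrib_fun_def M_def
  by (subst measure_distr[OF pos_meas]) (auto simp: space_PM)

lemma S_Suc: "S (Suc k) = S k + w k" by (simp add: S_def)
lemma S_0: "S 0 = 0" by (simp add: S_def)
lemma S_mono: "i \<le> k \<Longrightarrow> S i \<le> S k"
  unfolding S_def by (rule sum_mono2) (auto simp: w_nonneg)
lemma S_lim: "S \<longlonglongrightarrow> 1"
  unfolding S_def using summable_LIMSEQ[OF summable_w] by (simp add: suminf_w)
lemma S_le1: "S k \<le> 1"
  unfolding S_def using sum_le_suminf[OF summable_w, of "{..<k}"] w_nonneg by (simp add: suminf_w)
lemma S_nonneg: "S k \<ge> 0" unfolding S_def by (simp add: sum_nonneg w_nonneg)

lemma F_neg: "y < 0 \<Longrightarrow> distrib_fun M y = 0"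
proof -
  assume "y < 0"
  then have "pos -` {..y} = {}" using pos_nonneg by (auto simp: not_le) (meson le_less_trans not_le pos_nonneg)
  then show ?thesis by (simp add: F_M)
qed

lemma F_pos: "distrib_fun M (pos k) = S (Suc k)"
proof -
  have "pos -` {..pos k} = {..k}" by (auto simp: pos_le_iff)
  then show ?thesis by (simp add: F_M measure_PM_finite S_def lessThan_Suc_atMost)
qed

lemma F_below: "y < pos k \<Longrightarrow> distrib_fun M y \<le> S k"
proof -
  assume y: "y < pos k"
  interpret P: prob_space PM by (rule prob_PM)
  have "pos -` {..y} \<subseteq> {..<k}"
  proof
    fix i assume "i \<in> pos -` {..y}"
    then have "pos i < pos k" using y by auto
    then show "i \<in> {..<k}" using pos_strict by (simp add: strict_mono_less)
  qed
  then have "measure PM (pos -` {..y}) \<le> measure PM {..<k}"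
    by (intro P.finite_measure_mono) (auto simp: sets_PM)
  then show ?thesis by (simp add: F_M measure_PM_finite S_def)
qed

lemma F_mono: "mono (distrib_fun M)"
proof (rule monoI)
  interpret P: prob_space PM by (rule prob_PM)
  fix y y' :: real assume "y \<le> y'"
  then have "pos -` {..y} \<subseteq> pos -` {..y'}" by auto
  then show "distrib_fun M y \<le> distrib_fun M y'"
    unfolding F_M by (intro P.finite_measure_mono) (auto simp: sets_PM)
qed

lemma F_above: "pos k \<le> y \<Longrightarrow> S (Suc k) \<le> distrib_fun M y"
  using F_mono F_pos by (metis monoD)

lemma exists_S_gt: "t < 1 \<Longrightarrow> \<exists>k. t < S (Suc k)"
proof -
  assume "t < 1"
  then have "eventually (\<lambda>k. t < S k) sequentially"
    using S_lim by (simp add: order_tendsto_iff)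
  then obtain k where "t < S (Suc k)"
    by (metis eventually_sequentially le_add2 plus_1_eq_Suc)
  then show ?thesis by blast
qed

lemma QM_set: assumes "0 < t" "t < 1"
  shows "{y. distrib_fun M y \<le> t} \<noteq> {}" "bdd_above {y. distrib_fun M y \<le> t}"
proof -
  have "-1 \<in> {y. distrib_fun M y \<le> t}" using F_neg[of "-1"] assms by simp
  then show "{y. distrib_fun M y \<le> t} \<noteq> {}" by blast
  obtain k where k: "t < S (Suc k)" using exists_S_gt assms by blast
  have "y \<le> pos k" if "distrib_fun M y \<le> t" for y
    using F_above[of k y] that k by (cases "pos k \<le> y") auto
  then show "bdd_above {y. distrib_fun M y \<le> t}" unfolding bdd_above_def by blast
qed

lemma QM_le: assumes "0 < t" "t < S (Suc k)"
  shows "quantile M t \<le> pos k"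
proof -
  have t1: "t < 1" using assms S_le1[of "Suc k"] by simp
  show ?thesis
    unfolding quantile_def
  proof (rule cSup_least)
    show "{y. distrib_fun M y \<le> t} \<noteq> {}" using QM_set assms t1 by blast
    fix y assume "y \<in> {y. distrib_fun M y \<le> t}"
    then show "y \<le> pos k" using F_above[of k y] assms by (cases "pos k \<le> y") auto
  qed
qed

lemma QM_ge: assumes "S k < t" "t < 1"
  shows "pos k \<le> quantile M t"
proof (rule dense_le)
  have t0: "0 < t" using assms S_nonneg[of k] by simp
  fix y assume "y < pos k"
  then have "distrib_fun M y \<le> t" using F_below[of y k] assms by simp
  then show "y \<le> quantile M t"
    unfolding quantile_def using QM_set[OF t0 assms(2)] by (intro cSup_upper) auto
qed

lemma QM_nonneg: assumes "0 < t" "t < 1"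
  shows "0 \<le> quantile M t"
proof (rule dense_le)
  fix y :: real assume "y < 0"
  then have "distrib_fun M y \<le> t" using F_neg[of y] assms by simp
  then show "y \<le> quantile M t"
    unfolding quantile_def using QM_set[OF assms] by (intro cSup_upper) auto
qed

lemma QM_eq: assumes "S k < t" "t < S (Suc k)"
  shows "quantile M t = pos k"
  using QM_le[of t k] QM_ge[of k t] assms S_nonneg[of k] S_le1[of "Suc k"] by simp

lemma QM_mono: "mono_on {0<..<1} (quantile M)"
  by (rule quantile_mono_on[OF F_mono]) (use QM_set in auto)

end


context cons begin

lemma sum_mom_fin: "(\<Sum>k. ennreal (mom k)) < \<infinity>"
  using suminf_ennreal2[OF mom_nonneg summable_mom] by (simp add: top.not_eq_extremum)

lemma M_moment: "integrable M (\<lambda>x. \<bar>x\<bar> powr r)"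
proof (rule integrableI_bounded)
  show "(\<lambda>x::real. \<bar>x\<bar> powr r) \<in> borel_measurable M" by (simp add: sets_M measurable_cong_sets[OF sets_M refl])
  have "(\<integral>\<^sup>+x. ennreal (norm (\<bar>x\<bar> powr r)) \<partial>M) = (\<integral>\<^sup>+k. ennreal (\<bar>pos k\<bar> powr r) \<partial>PM)"
    unfolding M_def by (subst nn_integral_distr[OF pos_meas]) auto
  also have "\<dots> = (\<integral>\<^sup>+k. ennreal (w k) * ennreal (\<bar>pos k\<bar> powr r) \<partial>count_space UNIV)"
    unfolding PM_def point_measure_def by (subst nn_integral_density) auto
  also have "\<dots> = (\<Sum>k. ennreal (w k) * ennreal (\<bar>pos k\<bar> powr r))"
    by (rule nn_integral_count_space_nat)
  also have "\<dots> = (\<Sum>k. ennreal (mom k))"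
    using pos_nonneg w_nonneg by (simp add: ennreal_mult'[symmetric] mom_eq)
  finally show "(\<integral>\<^sup>+x. ennreal (norm (\<bar>x\<bar> powr r)) \<partial>M) < \<infinity>" using sum_mom_fin by simp
qed

lemma M_in: "M \<in> Pr_meas r"
  unfolding Pr_meas_def using prob_M sets_M M_moment by auto

lemma find_k: assumes "0 < t" "t < 1" shows "\<exists>k. S k \<le> t \<and> t < S (Suc k)"
proof -
  obtain k0 where k0: "t < S (Suc k0)" using exists_S_gt assms by blast
  define k where "k = (LEAST k. t < S (Suc k))"
  have k: "t < S (Suc k)" unfolding k_def by (rule LeastI[of _ k0]) (rule k0)
  have "S k \<le> t"
  proof (cases k)
    case 0 then show ?thesis using assms by (simp add: S_0)
  next
    case (Suc i)
    then have "\<not> t < S (Suc i)" using not_less_Least[of i "\<lambda>k. t < S (Suc k)"] by (simp add: k_def)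
    then show ?thesis using Suc by simp
  qed
  then show ?thesis using k by blast
qed

lemma QM_int: "set_integrable lborel {0<..<1} (\<lambda>t. \<bar>quantile M t\<bar> powr r)"
proof -
  have meas: "(\<lambda>t. \<bar>quantile M t\<bar> powr r) \<in> borel_measurable (restrict_space borel {0<..<1})"
    using borel_measurable_mono_on_fnc[OF QM_mono] by measurable
  have measI: "(\<lambda>t. indicator {0<..<1} t *\<^sub>R (\<bar>quantile M t\<bar> powr r)) \<in> borel_measurable lborel"
    using meas by (subst (asm) borel_measurable_restrict_space_iff) auto
  define G where "G t = (\<Sum>k. ennreal (pos k powr r) * indicator {S k..<S (Suc k)} t)" for t
  have pw: "ennreal (norm (indicator {0<..<1} t *\<^sub>R (\<bar>quantile M t\<bar> powr r))) \<le> G t" for t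
  proof (cases "t \<in> {0<..<1}")
    case False then show ?thesis by simp
  next
    case True
    then obtain k where k: "S k \<le> t" "t < S (Suc k)" using find_k by auto
    have q: "0 \<le> quantile M t" "quantile M t \<le> pos k" using True QM_nonneg QM_le k by auto
    have "ennreal (norm (indicator {0<..<1} t *\<^sub>R (\<bar>quantile M t\<bar> powr r))) = ennreal (quantile M t powr r)"
      using True q by simp
    also have "\<dots> \<le> ennreal (pos k powr r)"
      using q r0 by (intro ennreal_leI powr_mono2) auto
    also have "\<dots> = (\<Sum>i\<in>{k}. ennreal (pos i powr r) * indicator {S i..<S (Suc i)} t)"
      using k by simp
    also have "\<dots> \<le> G t" unfolding G_def by (rule sum_le_suminf) auto
    finally show ?thesis .
  qed
  have "(\<integral>\<^sup>+t. ennreal (norm (indicator {0<..<1} t *\<^sub>R (\<bar>quantile M t\<bar> powr r))) \<partial>lborel)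
        \<le> (\<integral>\<^sup>+t. G t \<partial>lborel)"
    by (rule nn_integral_mono) (rule pw)
  also have "\<dots> = (\<Sum>k. \<integral>\<^sup>+t. ennreal (pos k powr r) * indicator {S k..<S (Suc k)} t \<partial>lborel)"
    unfolding G_def by (rule nn_integral_suminf) auto
  also have "\<dots> = (\<Sum>k. ennreal (mom k))"
  proof (rule suminf_cong)
    fix k
    have "S k \<le> S (Suc k)" by (rule S_mono) simp
    then have "(\<integral>\<^sup>+t. ennreal (pos k powr r) * indicator {S k..<S (Suc k)} t \<partial>lborel)
          = ennreal (pos k powr r) * ennreal (w k)"
      by (subst nn_integral_cmult_indicator) (auto simp: S_Suc)
    also have "\<dots> = ennreal (mom k)"
      using w_nonneg[of k] by (simp add: ennreal_mult'[symmetric] mom_eq[symmetric] mult.commute)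
    finally show "(\<integral>\<^sup>+t. ennreal (pos k powr r) * indicator {S k..<S (Suc k)} t \<partial>lborel) = ennreal (mom k)" .
  qed
  finally have fin: "(\<integral>\<^sup>+t. ennreal (norm (indicator {0<..<1} t *\<^sub>R (\<bar>quantile M t\<bar> powr r))) \<partial>lborel) < \<infinity>"
    using sum_mom_fin by (simp add: le_less_trans)
  show ?thesis unfolding set_integrable_def by (rule integrableI_bounded[OF measI fin])
qed

end


context cons begin

lemma balls_disj:
  assumes "k \<ge> 1" "k' \<ge> 1" "\<bar>y - pos k\<bar> < pos k / 2" "\<bar>y - pos k'\<bar> < pos k' / 2"
  shows "k = k'"
proof -
  have key: False if "1 \<le> k" "k < k'" "\<bar>y - pos k\<bar> < pos k / 2" "\<bar>y - pos k'\<bar> < pos k' / 2" for k k'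
  proof -
    have pk: "pos k = L * 4^k" "pos k' = L * 4^k'" using that by (auto simp: pos_def)
    have "(4::real)^Suc k \<le> 4^k'" using that by (intro power_increasing) auto
    then have "L * 4 * 4^k \<le> L * 4^k'" using L0 by simp
    moreover have "L * 4^k > 0" using L0 by simp
    moreover have "y < 3/2 * pos k" "y > pos k' / 2" using that(3,4) by linarith+
    ultimately show False using pk by linarith
  qed
  show ?thesis
    using key[of k k'] key[of k' k] assms by (cases k k' rule: linorder_cases) auto
qed

lemma choose_j: assumes "n \<ge> 1" shows "\<exists>j. n \<le> N j \<and> a n powr r \<le> A / 2^j"
proof -
  have ex: "n \<le> N n" by (simp add: N_def)
  define j where "j = (LEAST j. n \<le> N j)"
  have j: "n \<le> N j" unfolding j_def by (rule LeastI[of _ n]) (rule ex)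
  have "a n powr r \<le> A / 2^j"
  proof (cases j)
    case 0 then show ?thesis using Abnd[OF assms] by simp
  next
    case (Suc i)
    then have "\<not> n \<le> N i" using not_less_Least[of i "\<lambda>j. n \<le> N j"] by (simp add: j_def)
    then have "n \<ge> T (Suc i)" by (simp add: N_def)
    then show ?thesis using Tb assms Suc by blast
  qed
  then show ?thesis using j by blast
qed

lemma block_val:
  assumes "l \<le> 2 * N j"
  shows "w (Suc (prod_encode (j, l))) * (pos (Suc (prod_encode (j, l))) / 2) powr r = v j"
proof -
  define m where "m = prod_encode (j, l)"
  define P where "P = (L * 4^Suc m) powr r"
  have P0: "P > 0" using L0 by (simp add: P_def)
  have gm: "g m = v j * 2 powr r" using assms by (simp add: g_def m_def h_simp)
  have pe: "pos (Suc m) = L * 4^Suc m" by (simp add: pos_def)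
  have "(pos (Suc m) / 2) powr r = P / 2 powr r"
    unfolding pe P_def using L0 by (intro powr_divide; auto)
  then have "w (Suc m) * (pos (Suc m) / 2) powr r = v j * 2 powr r / P * (P / 2 powr r)"
    by (simp add: w_Suc w1_def gm P_def)
  also have "\<dots> = v j" using P0 by simp
  finally show ?thesis by (simp add: m_def)
qed

end


lemma powr_diff_bound:
  fixes u v B r :: real
  assumes "\<bar>u\<bar> \<le> B" "r > 0"
  shows "\<bar>u - v\<bar> powr r \<le> 2 powr r * (B powr r + \<bar>v\<bar> powr r)"
proof -
  have B0: "B \<ge> 0" using assms(1) by simp
  have "\<bar>u - v\<bar> \<le> 2 * max B \<bar>v\<bar>" using assms(1) by (auto simp: max_def)
  then have "\<bar>u - v\<bar> powr r \<le> (2 * max B \<bar>v\<bar>) powr r"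
    using assms(2) by (intro powr_mono2) auto
  also have "\<dots> = 2 powr r * max B \<bar>v\<bar> powr r" using B0 by (simp add: powr_mult)
  also have "max B \<bar>v\<bar> powr r \<le> B powr r + \<bar>v\<bar> powr r" by (auto simp: max_def)
  finally show ?thesis by simp
qed

context cons begin

lemma I_disj:
  assumes "k \<noteq> k'" "t \<in> {S k<..<S (Suc k)}"
  shows "t \<notin> {S k'<..<S (Suc k')}"
proof
  assume t': "t \<in> {S k'<..<S (Suc k')}"
  show False
  proof (cases "k < k'")
    case True
    then have "S (Suc k) \<le> S k'" by (intro S_mono) simp
    then show False using assms t' by auto
  next
    case False
    then have "k' < k" using assms by simp
    then have "S (Suc k') \<le> S k" by (intro S_mono) simp
    then show False using assms t' by auto
  qed
qed

lemma main_bound: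
  assumes n: "n \<ge> 1" and p: "p \<in> Pi_vec n"
  shows "a n \<le> d_r r (discrete_meas n x p) M"
proof -
  define D where "D = discrete_meas n x p"
  define H where "H t = \<bar>quantile D t - quantile M t\<bar> powr r" for t
  obtain j where j: "n \<le> N j" "a n powr r \<le> A / 2^j" using choose_j[OF n] by blast
  define e where "e l = Suc (prod_encode (j, l))" for l
  define K where "K = e ` {..2 * N j}"
  have inj_e: "inj e" unfolding e_def by (rule injI) (simp add: prod_encode_eq)
  have cardK: "card K = 2 * N j + 1"
    unfolding K_def by (subst card_image) (auto intro: inj_on_subset[OF inj_e])
  have finK: "finite K" by (simp add: K_def)
  have Kval: "w k * (pos k / 2) powr r = v j" if "k \<in> K" for k
    using that block_val by (auto simp: K_def e_def)
  have K1: "k \<ge> 1" if "k \<in> K" for k using that by (auto simp: K_def e_def)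
  define Nr where "Nr = {k\<in>K. \<exists>i<n. \<bar>x i - pos k\<bar> < pos k / 2}"
  have cardNr: "card Nr \<le> n"
  proof -
    define \<phi> where "\<phi> k = (SOME i. i<n \<and> \<bar>x i - pos k\<bar> < pos k / 2)" for k
    have \<phi>: "\<phi> k < n \<and> \<bar>x (\<phi> k) - pos k\<bar> < pos k / 2" if "k \<in> Nr" for k
      unfolding \<phi>_def by (rule someI_ex) (use that in \<open>auto simp: Nr_def\<close>)
    have "inj_on \<phi> Nr"
    proof (rule inj_onI)
      fix k k' assume kk: "k \<in> Nr" "k' \<in> Nr" "\<phi> k = \<phi> k'"
      show "k = k'"
        using balls_disj[of k k' "x (\<phi> k)"] \<phi>[OF kk(1)] \<phi>[OF kk(2)] kk K1
        by (auto simp: Nr_def)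
    qed
    moreover have "\<phi> ` Nr \<subseteq> {..<n}" using \<phi> by auto
    ultimately have "card Nr \<le> card {..<n}" by (intro card_inj_on_le) auto
    then show ?thesis by simp
  qed
  define K' where "K' = K - Nr"
  have finK': "finite K'" using finK by (simp add: K'_def)
  have cardK': "card K' \<ge> N j + 1"
  proof -
    have "Nr \<subseteq> K" by (auto simp: Nr_def)
    then have "card K' = card K - card Nr" unfolding K'_def
      by (intro card_Diff_subset) (auto intro: finite_subset[OF _ finK])
    then show ?thesis using cardK cardNr j(1) by simp
  qed
  have sumK': "A / 2^j \<le> (\<Sum>k\<in>K'. (pos k / 2) powr r * w k)"
  proof -
    have "(\<Sum>k\<in>K'. (pos k / 2) powr r * w k) = real (card K') * v j"
      using Kval by (simp add: K'_def mult.commute)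
    moreover have "real (card K') * v j \<ge> real (N j) * v j"
      using cardK' v_nonneg by (intro mult_right_mono) auto
    moreover have "real (N j) * v j = A / 2^j" using N1[of j] by (simp add: v_def)
    ultimately show ?thesis by simp
  qed
  define lo where "lo t = (\<Sum>k\<in>K'. (pos k / 2) powr r * indicator {S k<..<S (Suc k)} t)" for t
  have Sle: "S k \<le> S (Suc k)" for k by (rule S_mono) simp
  have lo_int: "integrable lborel lo"
    unfolding lo_def
  proof (rule Bochner_Integration.integrable_sum)
    fix k show "integrable lborel (\<lambda>t. (pos k / 2) powr r * indicator {S k<..<S (Suc k)} t)"
      using Sle[of k] by (intro integrable_mult_right integrable_real_indicator) auto
  qed
  have lo_val: "integral\<^sup>L lborel lo = (\<Sum>k\<in>K'. (pos k / 2) powr r * w k)"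
    unfolding lo_def using Sle
    by (subst Bochner_Integration.integral_sum) (auto intro!: integrable_mult_right integrable_real_indicator sum.cong simp: S_Suc)
  have lo_zero: "lo t = 0" if "t \<notin> {0<..<1}" for t
  proof -
    have "indicator {S k<..<S (Suc k)} t = (0::real)" for k
      using that S_nonneg[of k] S_le1[of "Suc k"] by (auto simp: indicator_def)
    then show ?thesis by (simp add: lo_def)
  qed
  have lo_ind: "indicator {0<..<1} t *\<^sub>R lo t = lo t" for t
    using lo_zero[of t] by (cases "t \<in> {0<..<1}") auto
  have lo_sint: "set_integrable lborel {0<..<1} lo"
    unfolding set_integrable_def lo_ind using lo_int .
  have lo_sval: "(LINT t:{0<..<1}|lborel. lo t) = (\<Sum>k\<in>K'. (pos k / 2) powr r * w k)"
    unfolding set_lebesgue_integral_def lo_ind using lo_val .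
  have pw: "lo t \<le> H t" if t: "t \<in> {0<..<1}" for t
  proof (cases "\<exists>k\<in>K'. t \<in> {S k<..<S (Suc k)}")
    case True
    then obtain k where k: "k \<in> K'" "t \<in> {S k<..<S (Suc k)}" by blast
    have "lo t = (pos k / 2) powr r * indicator {S k<..<S (Suc k)} t
        + (\<Sum>k'\<in>K' - {k}. (pos k' / 2) powr r * indicator {S k'<..<S (Suc k')} t)"
      unfolding lo_def using finK' k(1) by (subst sum.remove) auto
    also have "(\<Sum>k'\<in>K' - {k}. (pos k' / 2) powr r * indicator {S k'<..<S (Suc k')} t) = 0"
      using I_disj[of k _ t] k(2) by (intro sum.neutral) (auto simp: indicator_def)
    finally have lo_t: "lo t = (pos k / 2) powr r" using k(2) by simp
    have qm: "quantile M t = pos k" using QM_eq k(2) by auto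
    obtain i where i: "i < n" "quantile D t = x i"
      using discrete_quantile(1)[OF p n, of t x] t by (auto simp: D_def)
    have "k \<notin> Nr" using k(1) by (simp add: K'_def)
    then have "\<not> \<bar>x i - pos k\<bar> < pos k / 2" using i(1) k(1) by (auto simp: Nr_def K'_def)
    then have far: "pos k / 2 \<le> \<bar>x i - pos k\<bar>" by simp
    have "(pos k / 2) powr r \<le> \<bar>x i - pos k\<bar> powr r"
      using far pos_nonneg[of k] r0 by (intro powr_mono2) auto
    then show ?thesis using lo_t qm i by (simp add: H_def)
  next
    case False
    then have "lo t = 0" unfolding lo_def by (intro sum.neutral) (auto simp: indicator_def)
    then show ?thesis by (simp add: H_def)
  qed
  define B where "B = (\<Sum>i<n. \<bar>x i\<bar>)"
  have QDb: "\<bar>quantile D t\<bar> \<le> B" if tt: "t \<in> {0<..<1}" for t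
  proof -
    obtain i where i: "i < n" "quantile D t = x i"
      using discrete_quantile(1)[OF p n, of t x] tt by (auto simp: D_def)
    have "\<bar>x i\<bar> \<le> B" unfolding B_def using i(1) by (intro member_le_sum) auto
    then show ?thesis using i by simp
  qed
  have H_sint: "set_integrable lborel {0<..<1} H"
  proof -
    define dom where "dom t = 2 powr r * B powr r * indicator {0<..<1} t
        + 2 powr r * (indicator {0<..<1} t *\<^sub>R (\<bar>quantile M t\<bar> powr r))" for t
    have dom_int: "integrable lborel dom"
      unfolding dom_def using QM_int unfolding set_integrable_def
      by (intro Bochner_Integration.integrable_add integrable_mult_right integrable_real_indicator) auto
    have measH: "(\<lambda>t. \<bar>quantile D t - quantile M t\<bar> powr r) \<in> borel_measurable (restrict_space borel {0<..<1})"
      using borel_measurable_mono_on_fnc[OF discrete_quantile(2)[OF p n, of x]]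
        borel_measurable_mono_on_fnc[OF QM_mono] unfolding D_def by measurable
    have measHI: "(\<lambda>t. indicator {0<..<1} t *\<^sub>R H t) \<in> borel_measurable lborel"
      using measH unfolding H_def by (subst (asm) borel_measurable_restrict_space_iff) auto
    have "norm (indicator {0<..<1} t *\<^sub>R H t) \<le> norm (dom t)" for t
    proof (cases "t \<in> {0<..<1}")
      case True
      have "H t \<le> 2 powr r * (B powr r + \<bar>quantile M t\<bar> powr r)"
        unfolding H_def by (rule powr_diff_bound[OF QDb[OF True] r0])
      then show ?thesis using True by (simp add: dom_def H_def algebra_simps)
    next
      case False then show ?thesis by (simp add: dom_def)
    qed
    then show ?thesis unfolding set_integrable_def
      by (intro Bochner_Integration.integrable_bound[OF dom_int measHI]) auto
  qed
  have "(LINT t:{0<..<1}|lborel. lo t) \<le> (LINT t:{0<..<1}|lborel. H t)"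
    by (rule set_integral_mono[OF lo_sint H_sint pw])
  then have I: "a n powr r \<le> (LINT t:{0<..<1}|lborel. H t)"
    using j(2) sumK' lo_sval by linarith
  have an: "a n \<ge> 0" using apos n by simp
  have "a n = (a n powr r) powr (1 / r)"
    using an r0 by (simp add: powr_powr)
  also have "\<dots> \<le> (LINT t:{0<..<1}|lborel. H t) powr (1 / r)"
    using I r0 an by (intro powr_mono2) auto
  also have "\<dots> = d_r r (discrete_meas n x p) M"
    unfolding d_r_def H_def D_def ..
  finally show ?thesis .
qed

end


theorem theorem5p12:
  fixes r :: real and a :: "nat \<Rightarrow> real"
  assumes "r \<ge> 1"
    and "\<And>n. n \<ge> 1 \<Longrightarrow> a n \<ge> 0"
    and "a \<longlonglongrightarrow> 0"
  shows "\<exists>M \<in> Pr_meas r. \<forall>n \<ge> 1. best_approx_err r n M \<ge> a n"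
proof -
  have r0: "r > 0" using assms(1) by simp
  obtain K where K: "K > 0" "\<And>n. norm (a n) \<le> K"
    using convergent_imp_Bseq[of a] assms(3) by (auto simp: convergent_def Bseq_def)
  define A where "A = max 1 (K powr r)"
  have A1: "A \<ge> 1" by (simp add: A_def)
  have Abnd: "a n powr r \<le> A" if "n \<ge> 1" for n
  proof -
    have "a n powr r \<le> K powr r"
      using K(2)[of n] assms(2)[OF that] r0 by (intro powr_mono2) auto
    then show ?thesis by (simp add: A_def)
  qed
  have exT: "\<exists>T. \<forall>n\<ge>T. n \<ge> 1 \<longrightarrow> a n powr r \<le> A / 2^j" for j
  proof -
    define \<epsilon> where "\<epsilon> = (A / 2^j) powr (1/r)"
    have e0: "\<epsilon> > 0" using A1 by (simp add: \<epsilon>_def)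
    obtain T where T: "\<forall>n\<ge>T. norm (a n - 0) < \<epsilon>"
      using LIMSEQ_D[OF assms(3) e0] by blast
    have "a n powr r \<le> A / 2^j" if "n \<ge> T" "n \<ge> 1" for n
    proof -
      have "a n powr r \<le> \<epsilon> powr r"
        using T that assms(2)[OF that(2)] r0 by (intro powr_mono2) auto
      also have "\<epsilon> powr r = A / 2^j" using A1 r0 by (simp add: \<epsilon>_def powr_powr)
      finally show ?thesis .
    qed
    then show ?thesis by blast
  qed
  define T where "T j = (SOME T. \<forall>n\<ge>T. n \<ge> 1 \<longrightarrow> a n powr r \<le> A / 2^j)" for j
  have Tb: "a n powr r \<le> A / 2^j" if "n \<ge> T j" "n \<ge> 1" for j n
    using someI_ex[OF exT[of j]] that by (auto simp: T_def)
  interpret C: cons r A a T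
    by unfold_locales (use assms(1) A1 Abnd Tb assms(2) in auto)
  show ?thesis
  proof (intro bexI[of _ C.M] allI impI)
    show "C.M \<in> Pr_meas r" by (rule C.M_in)
    fix n :: nat assume n: "n \<ge> 1"
    show "a n \<le> best_approx_err r n C.M"
      unfolding best_approx_err_def
    proof (rule cInf_greatest)
      have "(\<lambda>i. 0) \<in> Xi n" by (simp add: Xi_def)
      moreover have "(\<lambda>i. if i = 0 then 1 else 0) \<in> Pi_vec n"
        using n by (simp add: Pi_vec_def)
      ultimately show "{d_r r (discrete_meas n x p) C.M | x p. x \<in> Xi n \<and> p \<in> Pi_vec n} \<noteq> {}"
        by blast
    next
      fix d assume "d \<in> {d_r r (discrete_meas n x p) C.M | x p. x \<in> Xi n \<and> p \<in> Pi_vec n}"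
      then obtain x p where "d = d_r r (discrete_meas n x p) C.M" "p \<in> Pi_vec n" by blast
      then show "a n \<le> d" using C.main_bound[OF n] by simp
    qed
  qed
qed


end
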